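(* Let $\Omega_1,\Omega_2\subset\mathbb{R}^n$ be open, $1<q<\infty$, $q'=\frac{q}{q-1}$, and let $f\in BV_{\mathrm{loc}}(\Omega_1,\mathbb{R}^n)$ with $f(\Omega_1)\subset\Omega_2$ have no jump part, such that $u\circ f\in BV_{\mathrm{loc}}(\Omega_1)$ for all $u\in C_c^\infty(\Omega_2)$. For an open set $G\subset\Omega_2$ let $M(G)\in[0,\infty]$ be the smallest constant such that $|D(u\circ f)|(\Omega_1)\le M(G)\|Du\|_{L^q(G)}$ for all $u\in C_c^\infty(G)$. Then $M$ is monotone ($M(G)\le M(\tilde G)$ whenever $G\subset\tilde G$ are open) and, for every finite family $G_1,\dots,G_k$ of pairwise disjoint open subsets of $\Omega_2$, $$M\Big(\bigcup_{j=1}^k G_j\Big)^{q'}\le\sum_{j=1}^k M(G_j)^{q'}.$$ *)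

theory Defs
  imports "HOL-Analysis.Analysis"
begin

definition partial :: "(real^'n \<Rightarrow> real) \<Rightarrow> 'n \<Rightarrow> real^'n \<Rightarrow> real" where
  "partial g i x = deriv (\<lambda>t. g (x + t *\<^sub>R axis i 1)) 0"

definition has_partials_on :: "(real^'n) set \<Rightarrow> (real^'n \<Rightarrow> real) \<Rightarrow> bool" where
  "has_partials_on U g \<longleftrightarrow>
     (\<forall>i. \<forall>x\<in>U. (\<lambda>t. g (x + t *\<^sub>R axis i 1)) differentiable (at 0))"

fun Ck_on :: "nat \<Rightarrow> (real^'n) set \<Rightarrow> (real^'n \<Rightarrow> real) \<Rightarrow> bool" where
  "Ck_on 0 U g = continuous_on U g"
| "Ck_on (Suc k) U g = (continuous_on U g \<and> has_partials_on U g \<and>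
                        (\<forall>i. Ck_on k U (partial g i)))"

definition smooth_on :: "(real^'n) set \<Rightarrow> (real^'n \<Rightarrow> real) \<Rightarrow> bool" where
  "smooth_on U g \<longleftrightarrow> (\<forall>k. Ck_on k U g)"

definition tsupport :: "('a::topological_space \<Rightarrow> 'b::zero) \<Rightarrow> 'a set" where
  "tsupport g = closure {x. g x \<noteq> 0}"

definition test_fn :: "(real^'n) set \<Rightarrow> (real^'n \<Rightarrow> real) \<Rightarrow> bool" where
  "test_fn G u \<longleftrightarrow> smooth_on UNIV u \<and> compact (tsupport u) \<and> tsupport u \<subseteq> G"

definition C1c :: "(real^'n) set \<Rightarrow> (real^'n \<Rightarrow> real) \<Rightarrow> bool" where
  "C1c U g \<longleftrightarrow> Ck_on 1 UNIV g \<and> compact (tsupport g) \<and> tsupport g \<subseteq> U"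

definition grad :: "(real^'n \<Rightarrow> real) \<Rightarrow> real^'n \<Rightarrow> real^'n" where
  "grad u x = (\<chi> i. partial u i x)"

definition divg :: "(real^'n \<Rightarrow> real^'n) \<Rightarrow> real^'n \<Rightarrow> real" where
  "divg \<phi> x = (\<Sum>i\<in>UNIV. partial (\<lambda>y. \<phi> y $ i) i x)"

definition Lq_norm_grad :: "real \<Rightarrow> (real^'n) set \<Rightarrow> (real^'n \<Rightarrow> real) \<Rightarrow> real" where
  "Lq_norm_grad q G u = (LINT x:G|lborel. norm (grad u x) powr q) powr (1 / q)"

definition var :: "(real^'n \<Rightarrow> real) \<Rightarrow> (real^'n) set \<Rightarrow> ennreal" where
  "var g U = (SUP \<phi> \<in> {\<phi> :: real^'n \<Rightarrow> real^'n. (\<forall>i. C1c U (\<lambda>y. \<phi> y $ i)) \<and>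
                                   (\<forall>x. norm (\<phi> x) \<le> 1)}.
                ennreal (LINT x:U|lborel. g x * divg \<phi> x))"

text \<open>Total variation |Df|(U) of a vector-valued function (Frobenius norm on test fields).\<close>
definition var_vec :: "(real^'n \<Rightarrow> real^'n) \<Rightarrow> (real^'n) set \<Rightarrow> ennreal" where
  "var_vec f U = (SUP \<Phi> \<in> {\<Phi> :: real^'n \<Rightarrow> real^'n^'n. (\<forall>i j. C1c U (\<lambda>y. \<Phi> y $ i $ j)) \<and>
                                   (\<forall>x. norm (\<Phi> x) \<le> 1)}.
                ennreal (LINT x:U|lborel. (\<Sum>i\<in>UNIV. f x $ i * divg (\<lambda>y. \<Phi> y $ i) x)))"

text \<open>The total variation measure |Df|(A) of an arbitrary set A \<subseteq> \<Omega> (outer regularity).\<close>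
definition var_vec_meas :: "(real^'n \<Rightarrow> real^'n) \<Rightarrow> (real^'n) set \<Rightarrow> (real^'n) set \<Rightarrow> ennreal" where
  "var_vec_meas f \<Omega> A = (INF V \<in> {V. open V \<and> A \<subseteq> V \<and> V \<subseteq> \<Omega>}. var_vec f V)"

definition L1_loc :: "(real^'n) set \<Rightarrow> (real^'n \<Rightarrow> real) \<Rightarrow> bool" where
  "L1_loc \<Omega> g \<longleftrightarrow> (\<forall>K. compact K \<and> K \<subseteq> \<Omega> \<longrightarrow> set_integrable lborel K g)"

definition BV_loc :: "(real^'n) set \<Rightarrow> (real^'n \<Rightarrow> real) \<Rightarrow> bool" where
  "BV_loc \<Omega> g \<longleftrightarrow> L1_loc \<Omega> g \<and>
     (\<forall>V. open V \<and> compact (closure V) \<and> closure V \<subseteq> \<Omega> \<longrightarrow> var g V < \<infinity>)"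

definition BV_loc_vec :: "(real^'n) set \<Rightarrow> (real^'n \<Rightarrow> real^'n) \<Rightarrow> bool" where
  "BV_loc_vec \<Omega> f \<longleftrightarrow> (\<forall>i. BV_loc \<Omega> (\<lambda>x. f x $ i))"

definition half_ball :: "real^'n \<Rightarrow> real \<Rightarrow> real^'n \<Rightarrow> (real^'n) set" where
  "half_ball x \<rho> \<nu> = {y \<in> ball x \<rho>. (y - x) \<bullet> \<nu> > 0}"

definition avg_dev :: "(real^'n \<Rightarrow> real^'n) \<Rightarrow> (real^'n) set \<Rightarrow> real^'n \<Rightarrow> real" where
  "avg_dev f H a = (LINT y:H|lborel. norm (f y - a)) / measure lborel H"

text \<open>Approximate jump points (Ambrosio--Fusco--Pallara, Def. 3.67).\<close>
definition jump_set :: "(real^'n \<Rightarrow> real^'n) \<Rightarrow> (real^'n) set \<Rightarrow> (real^'n) set" where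
  "jump_set f \<Omega> = {x \<in> \<Omega>. \<exists>a b \<nu>. a \<noteq> b \<and> norm \<nu> = 1 \<and>
      ((\<lambda>\<rho>. avg_dev f (half_ball x \<rho> \<nu>) a) \<longlongrightarrow> 0) (at_right 0) \<and>
      ((\<lambda>\<rho>. avg_dev f (half_ball x \<rho> (- \<nu>)) b) \<longlongrightarrow> 0) (at_right 0)}"

text \<open>f has no jump part: D^j f = Df restricted to J_f vanishes, i.e. |Df|(J_f) = 0.\<close>
definition no_jump_part :: "(real^'n) set \<Rightarrow> (real^'n \<Rightarrow> real^'n) \<Rightarrow> bool" where
  "no_jump_part \<Omega> f \<longleftrightarrow> var_vec_meas f \<Omega> (jump_set f \<Omega>) = 0"

definition Mconst :: "(real^'n \<Rightarrow> real^'n) \<Rightarrow> (real^'n) set \<Rightarrow> real \<Rightarrow> (real^'n) set \<Rightarrow> ennreal" where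
  "Mconst f \<Omega>1 q G = Inf {C :: ennreal. \<forall>u. test_fn G u \<longrightarrow>
       var (u \<circ> f) \<Omega>1 \<le> C * ennreal (Lq_norm_grad q G u)}"

definition ennpow :: "ennreal \<Rightarrow> real \<Rightarrow> ennreal" where
  "ennpow x p = (if x = \<infinity> then \<infinity> else ennreal (enn2real x powr p))"

end

theory Submission
  imports Defs
begin

lemma ev_line:
  fixes x :: "real^'n"
  assumes "open V" "x \<in> V"
  shows "eventually (\<lambda>t. x + t *\<^sub>R axis i 1 \<in> V) (nhds (0::real))"
proof -
  obtain e where e: "e > 0" "ball x e \<subseteq> V" using assms open_contains_ball by blast
  show ?thesis unfolding eventually_nhds_metric
  proof (intro exI conjI allI impI)
    show "e > 0" by fact
    fix t :: real assume "dist t 0 < e"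
    hence "dist x (x + t *\<^sub>R axis i 1) < e" by (simp add: dist_norm)
    thus "x + t *\<^sub>R axis i 1 \<in> V" using e by auto
  qed
qed

lemma partial_local:
  fixes g h :: "real^'n \<Rightarrow> real"
  assumes "open V" "x \<in> V" "\<And>y. y \<in> V \<Longrightarrow> g y = h y"
  shows "partial g i x = partial h i x"
  unfolding partial_def
  apply (rule deriv_cong_ev)
  using eventually_mono[OF ev_line[OF assms(1,2), of i]] assms(3) by auto

lemma partials_local:
  fixes g h :: "real^'n \<Rightarrow> real"
  assumes "open V" "x \<in> V" "\<And>y. y \<in> V \<Longrightarrow> g y = h y"
    "(\<lambda>t. h (x + t *\<^sub>R axis i 1)) differentiable (at 0)"
  shows "(\<lambda>t. g (x + t *\<^sub>R axis i 1)) differentiable (at 0)"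
proof -
  have ev: "eventually (\<lambda>t. g (x + t *\<^sub>R axis i 1) = h (x + t *\<^sub>R axis i 1)) (nhds 0)"
    using eventually_mono[OF ev_line[OF assms(1,2), of i]] assms(3) by auto
  have ev2: "eventually (\<lambda>t. h (x + t *\<^sub>R axis i 1) = g (x + t *\<^sub>R axis i 1)) (at (0::real) within UNIV)"
    unfolding eventually_at_filter using ev by (rule eventually_mono) simp
  have e0: "h (x + 0 *\<^sub>R axis i 1) = g (x + 0 *\<^sub>R axis i 1)"
    using eventually_nhds_x_imp_x[OF ev] by simp
  from assms(4) obtain D where D: "((\<lambda>t. h (x + t *\<^sub>R axis i 1)) has_derivative D) (at 0)"
    unfolding differentiable_def by blast
  have "((\<lambda>t. g (x + t *\<^sub>R axis i 1)) has_derivative D) (at 0)"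
    by (rule has_derivative_transform_eventually[OF D ev2 e0 UNIV_I])
  then show ?thesis unfolding differentiable_def by blast
qed

lemma cont_local:
  assumes "\<And>y. y \<in> V \<Longrightarrow> g y = h y" "continuous_on V h"
  shows "continuous_on V g"
  using continuous_on_cong[of V V g h] assms by blast

lemma Ck_local:
  fixes g h :: "real^'n \<Rightarrow> real"
  assumes "open V" "\<And>y. y \<in> V \<Longrightarrow> g y = h y" "Ck_on k V h"
  shows "Ck_on k V g"
  using assms
proof (induction k arbitrary: g h)
  case 0
  then show ?case using cont_local[of V g h] by simp
next
  case (Suc k)
  have hyp: "continuous_on V h" "has_partials_on V h" "\<And>i. Ck_on k V (partial h i)"
    using Suc.prems(3) by simp_all
  have c: "continuous_on V g" using cont_local[of V g h, OF Suc.prems(2) hyp(1)] .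
  have p: "has_partials_on V g" unfolding has_partials_on_def
  proof (intro allI ballI)
    fix i x assume x: "x \<in> V"
    show "(\<lambda>t. g (x + t *\<^sub>R axis i 1)) differentiable (at 0)"
      using partials_local[OF Suc.prems(1) x Suc.prems(2) hyp(2)[unfolded has_partials_on_def, rule_format, OF x]] .
  qed
  have "Ck_on k V (partial g i)" for i
  proof (rule Suc.IH[OF Suc.prems(1) _ hyp(3)[of i]])
    fix y assume "y \<in> V" thus "partial g i y = partial h i y"
      by (rule partial_local[OF Suc.prems(1) _ Suc.prems(2)])
  qed
  then show ?case using c p by simp
qed

lemma Ck_mono: "Ck_on k U g \<Longrightarrow> V \<subseteq> U \<Longrightarrow> Ck_on k V g"
proof (induction k arbitrary: g)
  case 0 thus ?case using continuous_on_subset by simp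
next
  case (Suc k)
  have hyp: "continuous_on U g" "has_partials_on U g" "\<And>i. Ck_on k U (partial g i)"
    using Suc.prems(1) by simp_all
  have "continuous_on V g" using continuous_on_subset[OF hyp(1) Suc.prems(2)] .
  moreover have "has_partials_on V g" using hyp(2) Suc.prems(2) unfolding has_partials_on_def by blast
  moreover have "\<And>i. Ck_on k V (partial g i)" using Suc.IH[OF hyp(3) Suc.prems(2)] .
  ultimately show ?case by simp
qed

lemma Ck_glue: "open A \<Longrightarrow> open B \<Longrightarrow> Ck_on k A g \<Longrightarrow> Ck_on k B g \<Longrightarrow> Ck_on k (A \<union> B) g"
proof (induction k arbitrary: g)
  case 0 thus ?case using continuous_on_open_Un by simp
next
  case (Suc k)
  have hA: "continuous_on A g" "has_partials_on A g" "\<And>i. Ck_on k A (partial g i)"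
    using Suc.prems(3) by simp_all
  have hB: "continuous_on B g" "has_partials_on B g" "\<And>i. Ck_on k B (partial g i)"
    using Suc.prems(4) by simp_all
  have "continuous_on (A \<union> B) g" using continuous_on_open_Un[OF Suc.prems(1,2) hA(1) hB(1)] .
  moreover have "has_partials_on (A \<union> B) g" using hA(2) hB(2) unfolding has_partials_on_def by blast
  moreover have "\<And>i. Ck_on k (A \<union> B) (partial g i)" using Suc.IH[OF Suc.prems(1,2) hA(3) hB(3)] .
  ultimately show ?case by simp
qed

lemma partial_zero: "partial (\<lambda>_. 0) i = (\<lambda>_. 0)"
  unfolding partial_def by simp

lemma Ck_zero: "Ck_on k U (\<lambda>_. 0)"
proof (induction k)
  case 0 thus ?case by simp
next
  case (Suc k) thus ?case by (simp add: partial_zero has_partials_on_def)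
qed

lemma partial_out_tsupport:
  fixes g :: "real^'n \<Rightarrow> real"
  assumes "x \<notin> tsupport g"
  shows "partial g i x = 0"
proof -
  have o: "open (- tsupport g)" unfolding tsupport_def by (rule open_Compl) simp
  have z: "g y = 0" if "y \<in> - tsupport g" for y
  proof (rule ccontr)
    assume "g y \<noteq> 0"
    hence "y \<in> tsupport g" unfolding tsupport_def using closure_subset[of "{x. g x \<noteq> 0}"] by blast
    thus False using that by simp
  qed
  have "partial g i x = partial (\<lambda>_. 0) i x"
    by (rule partial_local[OF o _ z]) (use assms in simp)
  thus ?thesis by (simp add: partial_zero)
qed

lemma grad_out_tsupport:
  fixes g :: "real^'n \<Rightarrow> real"
  shows "x \<notin> tsupport g \<Longrightarrow> grad g x = 0"
  unfolding grad_def by (simp add: partial_out_tsupport vec_eq_iff)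

lemma restrict_test:
  fixes u :: "real^'n \<Rightarrow> real"
  assumes "test_fn W u" "open G" "open H" "tsupport u \<subseteq> G \<union> H" "G \<inter> H = {}"
  shows "test_fn G (\<lambda>x. if x \<in> G then u x else 0)"
proof -
  define T where "T = tsupport u - H"
  have cT: "compact T" unfolding T_def Diff_eq
    by (rule compact_Int_closed) (use assms(1,3) in \<open>simp_all add: test_fn_def closed_Compl\<close>)
  hence clT: "closed T" by (rule compact_imp_closed)
  have TG: "T \<subseteq> G" using assms(4) unfolding T_def by auto
  have sub: "{x. (if x \<in> G then u x else 0) \<noteq> 0} \<subseteq> T"
  proof (intro subsetI)
    fix x assume "x \<in> {x. (if x \<in> G then u x else 0) \<noteq> 0}"
    then have x: "x \<in> G" "u x \<noteq> 0" by (auto split: if_splits)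
    have "x \<in> tsupport u" using closure_subset[of "{x. u x \<noteq> 0}"] x(2) unfolding tsupport_def by blast
    moreover have "x \<notin> H" using x(1) assms(5) by blast
    ultimately show "x \<in> T" unfolding T_def by blast
  qed
  have ts: "tsupport (\<lambda>x. if x \<in> G then u x else 0) \<subseteq> T"
    unfolding tsupport_def using closure_minimal[OF sub clT] .
  have sm: "Ck_on k UNIV (\<lambda>x. if x \<in> G then u x else 0)" for k
  proof -
    have "Ck_on k UNIV u" using assms(1) unfolding test_fn_def smooth_on_def by blast
    then have "Ck_on k G u" by (rule Ck_mono) simp
    hence a: "Ck_on k G (\<lambda>x. if x \<in> G then u x else 0)"
      by (rule Ck_local[OF assms(2), rotated]) simp
    have oT: "open (- T)" using clT by (rule open_Compl)
    have b: "Ck_on k (- T) (\<lambda>x. if x \<in> G then u x else 0)"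
    proof (rule Ck_local[OF oT _ Ck_zero])
      fix y assume "y \<in> - T"
      show "(if y \<in> G then u y else 0) = 0"
      proof (rule ccontr)
        assume "(if y \<in> G then u y else 0) \<noteq> 0"
        hence "y \<in> T" using sub by blast
        thus False using \<open>y \<in> - T\<close> by simp
      qed
    qed
    have "Ck_on k (G \<union> - T) (\<lambda>x. if x \<in> G then u x else 0)"
      by (rule Ck_glue[OF assms(2) oT a b])
    moreover have "G \<union> - T = UNIV" using TG by blast
    ultimately show ?thesis by simp
  qed
  have cp: "compact (tsupport (\<lambda>x. if x \<in> G then u x else 0))"
  proof -
    have "compact (T \<inter> tsupport (\<lambda>x. if x \<in> G then u x else 0))"
      by (rule compact_Int_closed[OF cT]) (simp add: tsupport_def)
    moreover have "T \<inter> tsupport (\<lambda>x. if x \<in> G then u x else 0) = tsupport (\<lambda>x. if x \<in> G then u x else 0)"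
      using ts by blast
    ultimately show ?thesis by simp
  qed
  show ?thesis unfolding test_fn_def smooth_on_def
    by (intro conjI allI sm cp subset_trans[OF ts TG])
qed

lemma grad_cont:
  fixes u :: "real^'n \<Rightarrow> real"
  assumes "test_fn W u"
  shows "continuous_on UNIV (grad u)"
proof -
  have "Ck_on (Suc 0) UNIV u" using assms unfolding test_fn_def smooth_on_def by blast
  hence "\<And>i. continuous_on UNIV (partial u i)" by simp
  thus ?thesis unfolding grad_def by (rule continuous_on_vec_lambda)
qed

lemma h_zero_out:
  fixes u :: "real^'n \<Rightarrow> real"
  shows "x \<notin> tsupport u \<Longrightarrow> norm (grad u x) powr q = 0"
  by (simp add: grad_out_tsupport)

lemma integrable_h:
  fixes u :: "real^'n \<Rightarrow> real"
  assumes "test_fn W u" "q > 0"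
  shows "integrable lborel (\<lambda>x. norm (grad u x) powr q)"
proof -
  have c: "continuous_on (tsupport u) (\<lambda>x. norm (grad u x) powr q)"
    apply (rule continuous_on_powr'[of _ "\<lambda>x. norm (grad u x)" "\<lambda>_. q"])
    apply (rule continuous_on_norm[OF continuous_on_subset[OF grad_cont[OF assms(1)] subset_UNIV]])
    apply (rule continuous_on_const)
    using assms(2) by simp
  have "integrable lborel (\<lambda>x. indicator (tsupport u) x *\<^sub>R (norm (grad u x) powr q))"
    by (rule borel_integrable_compact[OF _ c]) (use assms(1) in \<open>simp add: test_fn_def\<close>)
  also have "(\<lambda>x. indicator (tsupport u) x *\<^sub>R (norm (grad u x) powr q)) = (\<lambda>x. norm (grad u x) powr q)"
  proof (rule ext)
    fix x show "indicator (tsupport u) x *\<^sub>R (norm (grad u x) powr q) = norm (grad u x) powr q"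
      by (cases "x \<in> tsupport u") (simp_all add: h_zero_out)
  qed
  finally show ?thesis .
qed

lemma Lq_eq:
  fixes u :: "real^'n \<Rightarrow> real"
  assumes "test_fn G u" "G \<subseteq> G'"
  shows "Lq_norm_grad q G' u = Lq_norm_grad q G u"
proof -
  have "(\<lambda>x. indicator G' x *\<^sub>R (norm (grad u x) powr q)) = (\<lambda>x. indicator G x *\<^sub>R (norm (grad u x) powr q))"
  proof (rule ext)
    fix x show "indicator G' x *\<^sub>R (norm (grad u x) powr q) = indicator G x *\<^sub>R (norm (grad u x) powr q)"
      using assms unfolding test_fn_def
      by (cases "x \<in> tsupport u") (auto simp add: h_zero_out indicator_def)
  qed
  thus ?thesis unfolding Lq_norm_grad_def set_lebesgue_integral_def by simp
qed

lemma Mconst_mono: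
  assumes "G \<subseteq> G'"
  shows "Mconst f \<Omega>1 q G \<le> Mconst f \<Omega>1 q G'"
  unfolding Mconst_def
proof (rule Inf_superset_mono, safe)
  fix C u assume H: "\<forall>u. test_fn G' u \<longrightarrow> var (u \<circ> f) \<Omega>1 \<le> C * ennreal (Lq_norm_grad q G' u)"
    and u: "test_fn G u"
  have "test_fn G' u" using u assms unfolding test_fn_def by auto
  thus "var (u \<circ> f) \<Omega>1 \<le> C * ennreal (Lq_norm_grad q G u)"
    using H Lq_eq[OF u assms] by metis
qed

lemma Mconst_attain:
  assumes "Mconst f \<Omega>1 q G < \<infinity>" "test_fn G u"
  shows "var (u \<circ> f) \<Omega>1 \<le> Mconst f \<Omega>1 q G * ennreal (Lq_norm_grad q G u)"
proof -
  define S where "S = {C :: ennreal. \<forall>u. test_fn G u \<longrightarrow>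
       var (u \<circ> f) \<Omega>1 \<le> C * ennreal (Lq_norm_grad q G u)}"
  have M: "Mconst f \<Omega>1 q G = Inf S" unfolding Mconst_def S_def by simp
  have Sne: "S \<noteq> {}" using assms(1) M by auto
  define a where "a = Lq_norm_grad q G u"
  show ?thesis
  proof (cases "a > 0")
    case False
    then obtain C where "C \<in> S" using Sne by auto
    hence "var (u \<circ> f) \<Omega>1 \<le> C * ennreal a" unfolding S_def a_def using assms(2) by auto
    also have "C * ennreal a = 0" using False by (simp add: ennreal_eq_0_iff)
    finally have "var (u \<circ> f) \<Omega>1 \<le> 0" .
    then show ?thesis by (metis le_zero_eq zero_le)
  next
    case True
    show ?thesis
    proof (rule ennreal_le_epsilon)
      fix e :: real assume e: "0 < e"
      have "Inf S + 0 < Inf S + ennreal (e / a)"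
      proof -
        have fin: "Inf S \<noteq> \<infinity>" using assms(1) unfolding M by (rule less_imp_neq)
        have "0 < ennreal (e / a)" using True e by simp
        with fin show ?thesis unfolding ennreal_add_left_cancel_less by blast
      qed
      hence "Inf S < Inf S + ennreal (e / a)" by simp
      hence "\<exists>C\<in>S. C < Inf S + ennreal (e / a)" by (simp only: Inf_less_iff)
      then obtain C where C: "C \<in> S" "C < Inf S + ennreal (e / a)" by blast
      have "var (u \<circ> f) \<Omega>1 \<le> C * ennreal a" using C(1) assms(2) unfolding S_def a_def by blast
      also have "\<dots> \<le> (Inf S + ennreal (e / a)) * ennreal a"
        by (rule mult_right_mono) (use C(2) in simp_all)
      also have "\<dots> = Inf S * ennreal a + ennreal (e / a) * ennreal a"
        by (rule distrib_right)
      also have "ennreal (e / a) * ennreal a = ennreal (e / a * a)"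
        by (rule ennreal_mult[symmetric]) (use True e in simp_all)
      also have "e / a * a = e" using True by simp
      finally have "var (u \<circ> f) \<Omega>1 \<le> Inf S * ennreal a + ennreal e" .
      thus "var (u \<circ> f) \<Omega>1 \<le> Mconst f \<Omega>1 q G * ennreal (Lq_norm_grad q G u) + ennreal e"
        unfolding M a_def .
    qed
  qed
qed

lemma divg_facts:
  fixes \<phi> :: "real^'n \<Rightarrow> real^'n"
  assumes "\<forall>i. C1c U (\<lambda>y. \<phi> y $ i)"
  defines "K \<equiv> (\<Union>i. tsupport (\<lambda>y. \<phi> y $ i))"
  shows "compact K" "K \<subseteq> U" "continuous_on UNIV (divg \<phi>)" "\<And>x. x \<notin> K \<Longrightarrow> divg \<phi> x = 0"
proof -
  show "compact K" unfolding K_def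
    by (rule compact_UN) (use assms(1) in \<open>simp_all add: C1c_def\<close>)
  show "K \<subseteq> U" unfolding K_def using assms(1) unfolding C1c_def by blast
  have "\<And>i. Ck_on (Suc 0) UNIV (\<lambda>y. \<phi> y $ i)" using assms(1) unfolding C1c_def by simp
  hence c: "\<And>i j. continuous_on UNIV (partial (\<lambda>y. \<phi> y $ i) j)" by simp
  show "continuous_on UNIV (divg \<phi>)" unfolding divg_def
    by (rule continuous_on_sum) (rule c)
  fix x assume "x \<notin> K"
  hence "\<And>i. x \<notin> tsupport (\<lambda>y. \<phi> y $ i)" unfolding K_def by blast
  thus "divg \<phi> x = 0" unfolding divg_def by (simp add: partial_out_tsupport)
qed

lemma int_prod:
  fixes \<phi> :: "real^'n \<Rightarrow> real^'n" and g :: "real^'n \<Rightarrow> real"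
  assumes "\<forall>i. C1c U (\<lambda>y. \<phi> y $ i)" "L1_loc U g"
  shows "set_integrable lborel U (\<lambda>x. g x * divg \<phi> x)"
proof -
  define K where "K = (\<Union>i. tsupport (\<lambda>y. \<phi> y $ i))"
  note F = divg_facts[OF assms(1), folded K_def]
  have gK: "integrable lborel (\<lambda>x. indicator K x *\<^sub>R g x)"
    using assms(2) F(1,2) unfolding L1_loc_def set_integrable_def by blast
  have "compact (divg \<phi> ` K)" by (rule compact_continuous_image[OF continuous_on_subset[OF F(3)] F(1)]) simp
  then obtain B where B: "\<And>x. x \<in> K \<Longrightarrow> norm (divg \<phi> x) \<le> B"
    using compact_imp_bounded[of "divg \<phi> ` K"] unfolding bounded_iff by blast
  have eq: "(\<lambda>x. indicator U x *\<^sub>R (g x * divg \<phi> x)) = (\<lambda>x. divg \<phi> x * (indicator K x *\<^sub>R g x))"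
  proof (rule ext)
    fix x show "indicator U x *\<^sub>R (g x * divg \<phi> x) = divg \<phi> x * (indicator K x *\<^sub>R g x)"
    proof (cases "x \<in> K")
      case True thus ?thesis using F(2) by (auto simp: indicator_def)
    next
      case False thus ?thesis using F(4)[OF False] by simp
    qed
  qed
  have md: "divg \<phi> \<in> borel_measurable lborel"
    using borel_measurable_continuous_onI[OF F(3)] by simp
  have "integrable lborel (\<lambda>x. divg \<phi> x * (indicator K x *\<^sub>R g x))"
  proof (rule Bochner_Integration.integrable_bound[OF integrable_scaleR_right[OF gK, of B]])
    show "(\<lambda>x. divg \<phi> x * (indicator K x *\<^sub>R g x)) \<in> borel_measurable lborel"
      using md borel_measurable_integrable[OF gK] by measurable
    show "AE x in lborel. norm (divg \<phi> x * (indicator K x *\<^sub>R g x)) \<le> norm (B *\<^sub>R (indicator K x *\<^sub>R g x))"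
    proof (rule AE_I2)
      fix x show "norm (divg \<phi> x * (indicator K x *\<^sub>R g x)) \<le> norm (B *\<^sub>R (indicator K x *\<^sub>R g x))"
      proof (cases "x \<in> K")
        case True
        have "\<bar>divg \<phi> x\<bar> \<le> B" using B[OF True] by simp
        hence "\<bar>divg \<phi> x\<bar> * \<bar>g x\<bar> \<le> \<bar>B\<bar> * \<bar>g x\<bar>" by (intro mult_right_mono) auto
        thus ?thesis using True by (simp add: abs_mult)
      next
        case False thus ?thesis by simp
      qed
    qed
  qed
  thus ?thesis unfolding set_integrable_def eq .
qed

lemma ennreal_add_le: "ennreal (a + b) \<le> ennreal a + ennreal b"
proof (cases "a \<ge> 0")
  case True
  show ?thesis
  proof (cases "b \<ge> 0")
    case True2: True
    then show ?thesis using True by simp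
  next
    case False
    have "ennreal (a + b) \<le> ennreal a" using False by (intro ennreal_leI) simp
    also have "\<dots> \<le> ennreal a + ennreal b" by simp
    finally show ?thesis .
  qed
next
  case False
  have "ennreal (a + b) \<le> ennreal b" using False by (intro ennreal_leI) simp
  also have "\<dots> \<le> ennreal a + ennreal b" by simp
  finally show ?thesis .
qed

lemma ennreal_sum_le:
  assumes "finite J"
  shows "ennreal (\<Sum>j\<in>J. x j) \<le> (\<Sum>j\<in>J. ennreal (x j))"
  using assms
proof (induction J rule: finite_induct)
  case empty thus ?case by simp
next
  case (insert j J)
  have "ennreal (\<Sum>j\<in>insert j J. x j) = ennreal (x j + (\<Sum>j\<in>J. x j))" using insert by simp
  also have "\<dots> \<le> ennreal (x j) + ennreal (\<Sum>j\<in>J. x j)" by (rule ennreal_add_le)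
  also have "\<dots> \<le> ennreal (x j) + (\<Sum>j\<in>J. ennreal (x j))" using insert.IH by (rule add_left_mono)
  also have "\<dots> = (\<Sum>j\<in>insert j J. ennreal (x j))" using insert by simp
  finally show ?case .
qed

lemma var_sum_le:
  fixes g :: "nat \<Rightarrow> real^'n \<Rightarrow> real"
  assumes "finite J"
    and int: "\<And>\<phi> j. \<forall>i. C1c U (\<lambda>y. \<phi> y $ i) \<Longrightarrow> j \<in> J \<Longrightarrow> set_integrable lborel U (\<lambda>x. g j x * divg \<phi> x)"
  shows "var (\<lambda>x. \<Sum>j\<in>J. g j x) U \<le> (\<Sum>j\<in>J. var (g j) U)"
  unfolding var_def
proof (rule SUP_least)
  fix \<phi> :: "real^'n \<Rightarrow> real^'n"
  assume "\<phi> \<in> {\<phi>. (\<forall>i. C1c U (\<lambda>y. \<phi> y $ i)) \<and> (\<forall>x. norm (\<phi> x) \<le> 1)}"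
  hence ph: "\<forall>i. C1c U (\<lambda>y. \<phi> y $ i)" "\<forall>x. norm (\<phi> x) \<le> 1" by auto
  have "(LINT x:U|lborel. (\<Sum>j\<in>J. g j x) * divg \<phi> x) = (LINT x:U|lborel. (\<Sum>j\<in>J. g j x * divg \<phi> x))"
    by (simp add: sum_distrib_right)
  also have "\<dots> = (\<Sum>j\<in>J. (LINT x:U|lborel. g j x * divg \<phi> x))"
    unfolding set_lebesgue_integral_def scaleR_sum_right
    by (rule Bochner_Integration.integral_sum) (use int[OF ph(1)] in \<open>simp add: set_integrable_def\<close>)
  finally have eq: "(LINT x:U|lborel. (\<Sum>j\<in>J. g j x) * divg \<phi> x) = (\<Sum>j\<in>J. (LINT x:U|lborel. g j x * divg \<phi> x))" .
  have "ennreal (LINT x:U|lborel. (\<Sum>j\<in>J. g j x) * divg \<phi> x) \<le> (\<Sum>j\<in>J. ennreal (LINT x:U|lborel. g j x * divg \<phi> x))"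
    unfolding eq by (rule ennreal_sum_le[OF assms(1)])
  also have "\<dots> \<le> (\<Sum>j\<in>J. (SUP \<phi> \<in> {\<phi> :: real^'n \<Rightarrow> real^'n. (\<forall>i. C1c U (\<lambda>y. \<phi> y $ i)) \<and> (\<forall>x. norm (\<phi> x) \<le> 1)}.
                ennreal (LINT x:U|lborel. g j x * divg \<phi> x)))"
    by (rule sum_mono, rule SUP_upper) (use ph in simp)
  finally show "ennreal (LINT x:U|lborel. (\<Sum>j\<in>J. g j x) * divg \<phi> x) \<le> (\<Sum>j\<in>J. (SUP \<phi> \<in> {\<phi> :: real^'n \<Rightarrow> real^'n. (\<forall>i. C1c U (\<lambda>y. \<phi> y $ i)) \<and> (\<forall>x. norm (\<phi> x) \<le> 1)}.
                ennreal (LINT x:U|lborel. g j x * divg \<phi> x)))" .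
qed

lemma sum_powr_zero:
  fixes a :: "nat \<Rightarrow> real" and p :: real
  assumes "finite J" "\<And>j. j \<in> J \<Longrightarrow> a j \<ge> (0::real)" "p > 0" "(\<Sum>j\<in>J. a j powr p) = 0"
  shows "\<And>j. j \<in> J \<Longrightarrow> a j = 0"
proof -
  fix j assume j: "j \<in> J"
  have "\<forall>j\<in>J. a j powr p = 0" using sum_nonneg_eq_0_iff[OF assms(1), of "\<lambda>j. a j powr p"] assms(4) by simp
  thus "a j = 0" using j by simp
qed

lemma holder_sum:
  fixes a b :: "nat \<Rightarrow> real"
  assumes "finite J" "p > 1" "q > 1" "1/p + 1/q = 1"
    "\<And>j. j \<in> J \<Longrightarrow> a j \<ge> 0" "\<And>j. j \<in> J \<Longrightarrow> b j \<ge> 0"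
  shows "(\<Sum>j\<in>J. a j * b j) \<le> (\<Sum>j\<in>J. a j powr p) powr (1/p) * (\<Sum>j\<in>J. b j powr q) powr (1/q)"
proof -
  define A where "A = (\<Sum>j\<in>J. a j powr p)"
  define B where "B = (\<Sum>j\<in>J. b j powr q)"
  have A0: "A \<ge> 0" "B \<ge> 0" unfolding A_def B_def by (simp_all add: sum_nonneg)
  show ?thesis
  proof (cases "A = 0 \<or> B = 0")
    case True
    have "\<forall>j\<in>J. a j * b j = 0"
    proof
      fix j assume j: "j \<in> J"
      show "a j * b j = 0"
      proof (cases "A = 0")
        case True
        have "a j = 0" by (rule sum_powr_zero[of J a p]) (use assms(1,2,5) True j in \<open>simp_all add: A_def\<close>)
        thus ?thesis by simp
      next
        case False
        hence "B = 0" using \<open>A = 0 \<or> B = 0\<close> by simp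
        have "b j = 0" by (rule sum_powr_zero[of J b q]) (use assms(1,3,6) \<open>B = 0\<close> j in \<open>simp_all add: B_def\<close>)
        thus ?thesis by simp
      qed
    qed
    hence "(\<Sum>j\<in>J. a j * b j) = 0" by (intro sum.neutral) blast
    thus ?thesis by simp
  next
    case False
    hence Ap: "A > 0" "B > 0" using A0 by auto
    define \<alpha> where "\<alpha> = A powr (1/p)"
    define \<beta> where "\<beta> = B powr (1/q)"
    have pos: "\<alpha> > 0" "\<beta> > 0" unfolding \<alpha>_def \<beta>_def using Ap by simp_all
    have ap: "\<alpha> powr p = A" unfolding \<alpha>_def using Ap assms(2) by (simp add: powr_powr)
    have bq: "\<beta> powr q = B" unfolding \<beta>_def using Ap assms(3) by (simp add: powr_powr)
    have each: "(a j / \<alpha>) * (b j / \<beta>) \<le> (a j powr p / A) / p + (b j powr q / B) / q" if j: "j \<in> J" for j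
    proof -
      have "(a j / \<alpha>) * (b j / \<beta>) \<le> (a j / \<alpha>) powr p / p + (b j / \<beta>) powr q / q"
        by (rule Youngs_inequality) (use assms pos j in auto)
      also have "(a j / \<alpha>) powr p = a j powr p / A"
        using assms(5)[OF j] pos ap by (simp add: powr_divide)
      also have "(b j / \<beta>) powr q = b j powr q / B"
        using assms(6)[OF j] pos bq by (simp add: powr_divide)
      finally show ?thesis .
    qed
    have "(\<Sum>j\<in>J. (a j / \<alpha>) * (b j / \<beta>)) \<le> (\<Sum>j\<in>J. (a j powr p / A) / p + (b j powr q / B) / q)"
      by (rule sum_mono) (rule each)
    also have "\<dots> = (\<Sum>j\<in>J. a j powr p) / A / p + (\<Sum>j\<in>J. b j powr q) / B / q"
      by (simp add: sum.distrib sum_divide_distrib)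
    also have "\<dots> = 1/p + 1/q" using Ap unfolding A_def B_def by simp
    finally have "(\<Sum>j\<in>J. (a j / \<alpha>) * (b j / \<beta>)) \<le> 1" using assms(4) by simp
    moreover have "(\<Sum>j\<in>J. (a j / \<alpha>) * (b j / \<beta>)) = (\<Sum>j\<in>J. a j * b j) / (\<alpha> * \<beta>)"
      by (simp add: sum_divide_distrib)
    ultimately have "(\<Sum>j\<in>J. a j * b j) \<le> \<alpha> * \<beta>"
      using pos by (simp add: divide_le_eq)
    thus ?thesis unfolding \<alpha>_def \<beta>_def A_def B_def .
  qed
qed

lemma sum_pieces:
  fixes u :: "real^'n \<Rightarrow> real" and Gs :: "nat \<Rightarrow> (real^'n) set"
  assumes "finite J" "\<And>i j. i \<in> J \<Longrightarrow> j \<in> J \<Longrightarrow> i \<noteq> j \<Longrightarrow> Gs i \<inter> Gs j = {}"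
    "tsupport u \<subseteq> (\<Union>j\<in>J. Gs j)"
  shows "u y = (\<Sum>j\<in>J. (if y \<in> Gs j then u y else 0))"
proof (cases "\<exists>j0\<in>J. y \<in> Gs j0")
  case True
  then obtain j0 where j0: "j0 \<in> J" "y \<in> Gs j0" by blast
  have "(\<Sum>j\<in>J. (if y \<in> Gs j then u y else 0)) = (\<Sum>j\<in>J. (if j0 = j then u y else 0))"
  proof (rule sum.cong[OF refl])
    fix j assume j: "j \<in> J"
    show "(if y \<in> Gs j then u y else 0) = (if j0 = j then u y else 0)"
      using assms(2)[OF j0(1) j] j0(2) by auto
  qed
  also have "\<dots> = u y" using j0(1) assms(1) by simp
  finally show ?thesis by simp
next
  case False
  hence "u y = 0" using assms(3) closure_subset[of "{x. u x \<noteq> 0}"] unfolding tsupport_def by blast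
  moreover have "(\<Sum>j\<in>J. (if y \<in> Gs j then u y else 0)) = 0" using False by (intro sum.neutral) simp
  ultimately show ?thesis by simp
qed

lemma grad_restrict:
  fixes u :: "real^'n \<Rightarrow> real"
  assumes "open G" "x \<in> G"
  shows "grad (\<lambda>x. if x \<in> G then u x else 0) x = grad u x"
  unfolding grad_def
proof (rule vec_eq_iff[THEN iffD2], intro allI)
  fix i
  have "partial (\<lambda>x. if x \<in> G then u x else 0) i x = partial u i x"
    by (rule partial_local[OF assms]) simp
  thus "(\<chi> i. partial (\<lambda>x. if x \<in> G then u x else 0) i x) $ i = (\<chi> i. partial u i x) $ i" by simp
qed

lemma Lq_union:
  fixes u :: "real^'n \<Rightarrow> real" and Gs :: "nat \<Rightarrow> (real^'n) set"
  assumes "test_fn W u" "q > 0" "finite J" "\<And>j. j \<in> J \<Longrightarrow> open (Gs j)"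
    "\<And>i j. i \<in> J \<Longrightarrow> j \<in> J \<Longrightarrow> i \<noteq> j \<Longrightarrow> Gs i \<inter> Gs j = {}"
  shows "(LINT x:(\<Union>j\<in>J. Gs j)|lborel. norm (grad u x) powr q) = (\<Sum>j\<in>J. LINT x:Gs j|lborel. norm (grad u x) powr q)"
proof (rule set_integral_finite_UN_AE[OF assms(3)])
  fix i j assume "i \<in> J" "j \<in> J"
  thus "AE x in lborel. x \<in> Gs i \<and> x \<in> Gs j \<longrightarrow> i = j" using assms(5) by (intro AE_I2) blast
next
  fix i assume "i \<in> J"
  thus "Gs i \<in> sets lborel" using assms(4) by simp
  show "set_integrable lborel (Gs i) (\<lambda>x. norm (grad u x) powr q)"
    unfolding set_integrable_def
    by (rule integrable_mult_indicator[OF _ integrable_h[OF assms(1,2)]]) (use assms(4) \<open>i \<in> J\<close> in simp)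
qed

theorem mainTheorem4:
  fixes f :: "real^'n \<Rightarrow> real^'n"
    and \<Omega>1 \<Omega>2 :: "(real^'n) set"
    and q q' :: real
  assumes "open \<Omega>1" and "open \<Omega>2"
    and "1 < q" and "q' = q / (q - 1)"
    and "BV_loc_vec \<Omega>1 f"
    and "f ` \<Omega>1 \<subseteq> \<Omega>2"
    and "no_jump_part \<Omega>1 f"
    and "\<And>u. test_fn \<Omega>2 u \<Longrightarrow> BV_loc \<Omega>1 (u \<circ> f)"
  shows "(\<forall>G G'. open G \<and> open G' \<and> G \<subseteq> G' \<and> G' \<subseteq> \<Omega>2 \<longrightarrow>
              Mconst f \<Omega>1 q G \<le> Mconst f \<Omega>1 q G')
       \<and> (\<forall>(k::nat) (Gs :: nat \<Rightarrow> (real^'n) set).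
            (\<forall>j\<in>{1..k}. open (Gs j) \<and> Gs j \<subseteq> \<Omega>2) \<and>
            (\<forall>i\<in>{1..k}. \<forall>j\<in>{1..k}. i \<noteq> j \<longrightarrow> Gs i \<inter> Gs j = {}) \<longrightarrow>
            ennpow (Mconst f \<Omega>1 q (\<Union>j\<in>{1..k}. Gs j)) q'
              \<le> (\<Sum>j\<in>{1..k}. ennpow (Mconst f \<Omega>1 q (Gs j)) q'))"
proof (intro conjI allI impI)
  fix G G' :: "(real^'n) set"
  assume "open G \<and> open G' \<and> G \<subseteq> G' \<and> G' \<subseteq> \<Omega>2"
  thus "Mconst f \<Omega>1 q G \<le> Mconst f \<Omega>1 q G'" using Mconst_mono by blast
next
  fix k :: nat and Gs :: "nat \<Rightarrow> (real^'n) set"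
  assume hyp: "(\<forall>j\<in>{1..k}. open (Gs j) \<and> Gs j \<subseteq> \<Omega>2) \<and>
            (\<forall>i\<in>{1..k}. \<forall>j\<in>{1..k}. i \<noteq> j \<longrightarrow> Gs i \<inter> Gs j = {})"
  define J where "J = {1..k}"
  have fJ: "finite J" unfolding J_def by simp
  have oG: "\<And>j. j \<in> J \<Longrightarrow> open (Gs j)" and sG: "\<And>j. j \<in> J \<Longrightarrow> Gs j \<subseteq> \<Omega>2"
    using hyp unfolding J_def by blast+
  have dG: "\<And>i j. i \<in> J \<Longrightarrow> j \<in> J \<Longrightarrow> i \<noteq> j \<Longrightarrow> Gs i \<inter> Gs j = {}"
    using hyp unfolding J_def by blast
  have q0: "q > 0" using assms(3) by simp
  have q'1: "q' > 1" unfolding assms(4) using assms(3) by (simp add: less_divide_eq)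
  have conj: "1/q' + 1/q = 1"
  proof -
    have "q - 1 \<noteq> 0" "q \<noteq> 0" using assms(3) by simp_all
    thus ?thesis unfolding assms(4) by (simp add: field_simps)
  qed
  define Mj where "Mj j = Mconst f \<Omega>1 q (Gs j)" for j
  define U where "U = (\<Union>j\<in>J. Gs j)"
  show "ennpow (Mconst f \<Omega>1 q (\<Union>j\<in>{1..k}. Gs j)) q' \<le> (\<Sum>j\<in>{1..k}. ennpow (Mconst f \<Omega>1 q (Gs j)) q')"
  proof (cases "\<exists>j\<in>J. Mj j = \<infinity>")
    case True
    then obtain j where j: "j \<in> J" "Mj j = \<infinity>" by blast
    have "\<infinity> = ennpow (Mj j) q'" using j(2) by (simp add: ennpow_def)
    also have "\<dots> \<le> (\<Sum>j\<in>J. ennpow (Mj j) q')" by (rule member_le_sum[OF j(1)]) (simp_all add: fJ)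
    finally have eq: "(\<Sum>j\<in>J. ennpow (Mj j) q') = \<infinity>" by (simp add: top_unique)
    have "ennpow (Mconst f \<Omega>1 q (\<Union>j\<in>J. Gs j)) q' \<le> (\<Sum>j\<in>J. ennpow (Mj j) q')"
      unfolding eq by simp
    thus ?thesis unfolding J_def Mj_def .
  next
    case False
    hence fin: "\<And>j. j \<in> J \<Longrightarrow> Mj j < \<infinity>" by (simp add: less_top)
    define m where "m j = enn2real (Mj j)" for j
    have Mm: "\<And>j. j \<in> J \<Longrightarrow> Mj j = ennreal (m j)" unfolding m_def using fin by (simp add: less_top)
    have m0: "\<And>j. m j \<ge> 0" unfolding m_def by simp
    define S where "S = (\<Sum>j\<in>J. m j powr q')"
    have S0: "S \<ge> 0" unfolding S_def by (simp add: sum_nonneg)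
    define C0 where "C0 = S powr (1/q')"
    have C00: "C0 \<ge> 0" unfolding C0_def by simp
    have key: "Mconst f \<Omega>1 q U \<le> ennreal C0"
      unfolding Mconst_def
    proof (rule Inf_lower, safe)
      fix u assume tu: "test_fn U u"
      define uj where "uj j = (\<lambda>x. if x \<in> Gs j then u x else 0)" for j
      have tuj: "test_fn (Gs j) (uj j)" if j: "j \<in> J" for j
        unfolding uj_def
      proof (rule restrict_test[OF tu oG[OF j], of "\<Union>i\<in>J - {j}. Gs i"])
        show "open (\<Union>i\<in>J - {j}. Gs i)" using oG by blast
        show "tsupport u \<subseteq> Gs j \<union> (\<Union>i\<in>J - {j}. Gs i)" using tu j unfolding test_fn_def U_def by blast
        show "Gs j \<inter> (\<Union>i\<in>J - {j}. Gs i) = {}" using dG j by blast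
      qed
      have tuj2: "test_fn \<Omega>2 (uj j)" if j: "j \<in> J" for j
        using tuj[OF j] sG[OF j] unfolding test_fn_def by blast
      have decomp: "u \<circ> f = (\<lambda>x. \<Sum>j\<in>J. (uj j \<circ> f) x)"
      proof (rule ext)
        fix x
        have "u (f x) = (\<Sum>j\<in>J. (if f x \<in> Gs j then u (f x) else 0))"
          by (rule sum_pieces[OF fJ dG]) (use tu in \<open>simp_all add: test_fn_def U_def\<close>)
        thus "(u \<circ> f) x = (\<Sum>j\<in>J. (uj j \<circ> f) x)" unfolding uj_def by simp
      qed
      have "var (u \<circ> f) \<Omega>1 = var (\<lambda>x. \<Sum>j\<in>J. (uj j \<circ> f) x) \<Omega>1" using decomp by simp
      also have "\<dots> \<le> (\<Sum>j\<in>J. var (uj j \<circ> f) \<Omega>1)"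
      proof (rule var_sum_le[OF fJ])
        fix \<phi> :: "real^'n \<Rightarrow> real^'n" and j
        assume "\<forall>i. C1c \<Omega>1 (\<lambda>y. \<phi> y $ i)" "j \<in> J"
        moreover have "L1_loc \<Omega>1 (uj j \<circ> f)" using assms(8)[OF tuj2[OF \<open>j \<in> J\<close>]] unfolding BV_loc_def by blast
        ultimately show "set_integrable lborel \<Omega>1 (\<lambda>x. (uj j \<circ> f) x * divg \<phi> x)"
          using int_prod by blast
      qed
      also have "\<dots> \<le> (\<Sum>j\<in>J. Mj j * ennreal (Lq_norm_grad q (Gs j) (uj j)))"
        by (rule sum_mono) (unfold Mj_def, rule Mconst_attain, use fin tuj in \<open>simp_all add: Mj_def\<close>)
      finally have v1: "var (u \<circ> f) \<Omega>1 \<le> (\<Sum>j\<in>J. Mj j * ennreal (Lq_norm_grad q (Gs j) (uj j)))" .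
      define I where "I j = (LINT x:Gs j|lborel. norm (grad u x) powr q)" for j
      have I0: "I j \<ge> 0" for j unfolding I_def set_lebesgue_integral_def
        by (rule Bochner_Integration.integral_nonneg) (simp add: indicator_def)
      have Lj: "Lq_norm_grad q (Gs j) (uj j) = I j powr (1/q)" if j: "j \<in> J" for j
      proof -
        have "(LINT x:Gs j|lborel. norm (grad (uj j) x) powr q) = I j"
          unfolding I_def
          by (rule set_lebesgue_integral_cong) (use oG[OF j] in \<open>simp_all add: uj_def grad_restrict\<close>)
        thus ?thesis unfolding Lq_norm_grad_def by simp
      qed
      have LU: "Lq_norm_grad q U u = (\<Sum>j\<in>J. I j) powr (1/q)"
        unfolding Lq_norm_grad_def U_def I_def using Lq_union[OF tu q0 fJ oG dG] by simp
      define a where "a j = I j powr (1/q)" for j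
      have a0: "\<And>j. a j \<ge> 0" unfolding a_def by simp
      have aq: "\<And>j. a j powr q = I j" unfolding a_def using I0 q0 by (simp add: powr_powr)
      have "(\<Sum>j\<in>J. Mj j * ennreal (Lq_norm_grad q (Gs j) (uj j))) = (\<Sum>j\<in>J. ennreal (m j * a j))"
        by (rule sum.cong[OF refl]) (simp add: Mm Lj a_def ennreal_mult m0 a0)
      also have "\<dots> = ennreal (\<Sum>j\<in>J. m j * a j)" by (rule sum_ennreal) (simp add: m0 a0)
      also have "\<dots> \<le> ennreal ((\<Sum>j\<in>J. m j powr q') powr (1/q') * (\<Sum>j\<in>J. a j powr q) powr (1/q))"
        by (rule ennreal_leI, rule holder_sum[OF fJ q'1 assms(3) conj]) (simp_all add: m0 a0)
      also have "\<dots> = ennreal C0 * ennreal (Lq_norm_grad q U u)"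
        unfolding LU aq C0_def S_def by (rule ennreal_mult) simp_all
      finally show "var (u \<circ> f) \<Omega>1 \<le> ennreal C0 * ennreal (Lq_norm_grad q U u)" using v1 by simp
    qed
    have Mfin: "Mconst f \<Omega>1 q U \<noteq> \<infinity>" using key by (auto simp: top_unique)
    have le: "enn2real (Mconst f \<Omega>1 q U) \<le> C0"
      using key Mfin C00 by (simp add: enn2real_leI)
    have "enn2real (Mconst f \<Omega>1 q U) powr q' \<le> C0 powr q'"
      by (rule powr_mono2[OF _ _ le]) (use q'1 in simp_all)
    also have "C0 powr q' = S" unfolding C0_def using S0 q'1 by (simp add: powr_powr)
    finally have "ennpow (Mconst f \<Omega>1 q U) q' \<le> ennreal S"
      unfolding ennpow_def using Mfin by (simp add: ennreal_leI)
    also have "ennreal S = (\<Sum>j\<in>J. ennpow (Mj j) q')"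
    proof -
      have "(\<Sum>j\<in>J. ennpow (Mj j) q') = (\<Sum>j\<in>J. ennreal (m j powr q'))"
      proof (rule sum.cong[OF refl])
        fix j assume "j \<in> J"
        hence "Mj j \<noteq> \<infinity>" using fin less_imp_neq by blast
        thus "ennpow (Mj j) q' = ennreal (m j powr q')" unfolding ennpow_def m_def by simp
      qed
      also have "\<dots> = ennreal S" unfolding S_def by (rule sum_ennreal) simp
      finally show ?thesis by simp
    qed
    finally show ?thesis unfolding U_def J_def Mj_def .
  qed
qed

end
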